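(* Let $p\ge3$ be odd and $\Gamma(v,x)=x^p-pxv^{p-1}+(p-1)v^p$ for $v\in[0,1]$, $x\in[-1,1]$. If $x,y,z\in[-1,1]$ are such that the matrix $\begin{pmatrix}x&z\\ z&y\end{pmatrix}$ is positive semi-definite, then for every $v\in[0,1]$, $$\Gamma(v,x)+\Gamma(v,y)+2\Gamma(v,z)\ge0.$$ *)

theory Defs
  imports Complex_Main
begin

definition Gamma :: "nat \<Rightarrow> real \<Rightarrow> real \<Rightarrow> real" where
  "Gamma p v x = x ^ p - real p * x * v ^ (p - 1) + (real p - 1) * v ^ p"

definition psd2 :: "real \<Rightarrow> real \<Rightarrow> real \<Rightarrow> bool" where
  "psd2 a b c \<longleftrightarrow> (\<forall>s t :: real. a * s^2 + 2 * c * s * t + b * t^2 \<ge> 0)"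

end

theory Submission
  imports Defs
begin

lemma amgm:
  fixes t v :: real
  assumes "0 \<le> t" "0 \<le> v" "p \<ge> 1"
  shows "real p * t * v ^ (p - 1) \<le> t ^ p + (real p - 1) * v ^ p"
proof (cases "v = 0")
  case True
  then show ?thesis using assms
    by (cases "p = 1") (auto simp: power_0_left)
next
  case False
  hence vp: "v > 0" using assms by auto
  obtain q where q: "p = Suc q" using assms by (cases p) auto
  have "1 + real p * (t / v - 1) \<le> (1 + (t / v - 1)) ^ p"
    by (rule Bernoulli_inequality) (use assms vp in simp)
  hence "(1 + real p * (t / v - 1)) * v ^ p \<le> (t / v) ^ p * v ^ p"
    by (intro mult_right_mono) (use vp in auto)
  also have "(t / v) ^ p * v ^ p = t ^ p" using vp by (simp add: power_divide)
  finally have h: "(1 + real p * (t / v - 1)) * v ^ p \<le> t ^ p" .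
  have "(1 + real p * (t / v - 1)) * v ^ p = real p * t * v ^ (p - 1) - (real p - 1) * v ^ p"
    using vp unfolding q by (simp add: field_simps)
  with h show ?thesis by simp
qed

lemma gamma_nonneg:
  assumes "0 \<le> t" "0 \<le> v" "p \<ge> 1"
  shows "0 \<le> Gamma p v t"
  using amgm[OF assms] unfolding Gamma_def by simp

lemma pow_diff_ge:
  fixes a b :: real
  assumes "0 \<le> b" "b \<le> a" "p \<ge> 1"
  shows "(a - b) * b ^ (p - 1) \<le> a ^ p - b ^ p"
proof -
  obtain q where q: "p = Suc q" using assms by (cases p) auto
  have "a * b ^ q \<le> a * a ^ q"
    using assms by (intro mult_left_mono power_mono) auto
  thus ?thesis unfolding q by (simp add: algebra_simps)
qed

lemma pow_diff_ge2:
  fixes a b :: real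
  assumes "0 \<le> b" "b \<le> a" "p \<ge> 1"
  shows "(a - b) * a ^ (p - 1) \<le> a ^ p - b ^ p"
proof -
  obtain q where q: "p = Suc q" using assms by (cases p) auto
  have "b * b ^ q \<le> b * a ^ q"
    using assms by (intro mult_left_mono power_mono) auto
  thus ?thesis unfolding q by (simp add: algebra_simps)
qed

lemma keyF:
  fixes a b v :: real
  assumes "0 \<le> b" "b \<le> a" "a \<le> 1" "0 \<le> v" "p \<ge> 1"
  shows "0 \<le> (a ^ p - b ^ p)^2 - real p * v ^ (p - 1) * (a - b)^2 + 4 * (real p - 1) * v ^ p"
proof -
  define m where "m = real p * v ^ (p - 1)"
  have d0: "0 \<le> a - b" using assms by simp
  have e: "(a - b) * a ^ (p - 1) \<le> a ^ p - b ^ p" by (rule pow_diff_ge2) (use assms in auto)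
  have A: "((a - b) * a ^ (p - 1))^2 \<le> (a ^ p - b ^ p)^2"
    using e d0 assms by (intro power_mono) auto
  have eq: "((a - b) * a ^ (p - 1))^2 = (a - b)^2 * (a ^ (p - 1))^2" by (simp add: power_mult_distrib)
  have vp: "0 \<le> (real p - 1) * v ^ p" using assms by simp
  have vp4: "0 \<le> 4 * (real p - 1) * v ^ p" using assms by simp
  show ?thesis
  proof (cases "m \<le> (a ^ (p - 1))^2")
    case True
    have "m * (a - b)^2 \<le> (a - b)^2 * (a ^ (p - 1))^2"
      using True by (metis mult.commute mult_right_mono zero_le_power2)
    then show ?thesis using A eq vp4 unfolding m_def by linarith
  next
    case False
    have sq: "(a - b)^2 \<le> a^2" using assms by (intro power_mono) auto
    have "a^2 * ((a ^ (p - 1))^2 - m) \<le> (a - b)^2 * ((a ^ (p - 1))^2 - m)"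
      using False sq by (intro mult_right_mono_neg) auto
    hence h1: "a^2 * (a ^ (p - 1))^2 - m * a^2 \<le> (a ^ p - b ^ p)^2 - m * (a - b)^2"
      using A eq by (simp add: algebra_simps)
    have g: "0 \<le> Gamma p v (a^2)" by (rule gamma_nonneg) (use assms in auto)
    obtain q where q: "p = Suc q" using assms by (cases p) auto
    have "a^2 * (a ^ (p - 1))^2 = (a^2)^p"
    proof -
      have "a^2 * (a ^ (p - 1))^2 = a^2 * a^(q*2)" unfolding q by (simp add: power_mult)
      also have "\<dots> = a^(2 + q*2)" by (simp add: power_add power2_eq_square)
      also have "\<dots> = (a^2)^p" unfolding q power_mult[symmetric] by (simp add: algebra_simps)
      finally show ?thesis .
    qed
    hence "Gamma p v (a^2) = a^2 * (a ^ (p - 1))^2 - m * a^2 + (real p - 1) * v ^ p"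
      unfolding Gamma_def m_def by (simp add: algebra_simps)
    then show ?thesis using h1 g vp vp4 unfolding m_def by linarith
  qed
qed

lemma keyG:
  fixes a b v :: real
  assumes "0 \<le> a" "a \<le> 1" "0 \<le> b" "b \<le> 1" "0 \<le> v" "p \<ge> 1"
  shows "0 \<le> Gamma p v (a^2) + Gamma p v (b^2) + 4 * (real p - 1) * v ^ p - 2 * Gamma p v (a * b)"
proof -
  have eq: "Gamma p v (a^2) + Gamma p v (b^2) - 2 * Gamma p v (a * b)
      = (a ^ p - b ^ p)^2 - real p * v ^ (p - 1) * (a - b)^2"
    unfolding Gamma_def by (simp add: power_mult_distrib power2_eq_square algebra_simps)
  have "0 \<le> (a ^ p - b ^ p)^2 - real p * v ^ (p - 1) * (a - b)^2 + 4 * (real p - 1) * v ^ p"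
  proof (cases "b \<le> a")
    case True thus ?thesis using keyF[of b a v p] assms by simp
  next
    case False
    hence "0 \<le> (b ^ p - a ^ p)^2 - real p * v ^ (p - 1) * (b - a)^2 + 4 * (real p - 1) * v ^ p"
      using keyF[of a b v p] assms by simp
    moreover have "(b ^ p - a ^ p)^2 = (a ^ p - b ^ p)^2" "(b - a)^2 = (a - b)^2"
      by (simp_all add: power2_commute)
    ultimately show ?thesis by simp
  qed
  thus ?thesis using eq by linarith
qed

theorem mainTheorem16:
  fixes p :: nat and x y z v :: real
  assumes "odd p" and "p \<ge> 3"
    and "x \<in> {-1..1}" and "y \<in> {-1..1}" and "z \<in> {-1..1}"
    and "psd2 x y z"
    and "v \<in> {0..1}"
  shows "Gamma p v x + Gamma p v y + 2 * Gamma p v z \<ge> 0"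
proof -
  have p1: "p \<ge> 1" using assms by simp
  have v0: "0 \<le> v" using assms by simp
  have x0: "0 \<le> x" using assms(6)[unfolded psd2_def, rule_format, of 1 0] by simp
  have y0: "0 \<le> y" using assms(6)[unfolded psd2_def, rule_format, of 0 1] by simp
  have zxy: "z^2 \<le> x * y"
  proof -
    have h1: "0 \<le> x * (x * y - z^2)"
      using assms(6)[unfolded psd2_def, rule_format, of z "-x"] by (simp add: power2_eq_square algebra_simps)
    have h2: "0 \<le> y * (x * y - z^2)"
      using assms(6)[unfolded psd2_def, rule_format, of y "-z"] by (simp add: power2_eq_square algebra_simps)
    have h3: "0 \<le> x + y * z^2 - 2 * z^2"
      using assms(6)[unfolded psd2_def, rule_format, of 1 "-z"] by (simp add: power2_eq_square algebra_simps)
    show ?thesis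
    proof (cases "x > 0 \<or> y > 0")
      case True
      then show ?thesis using h1 h2 by (auto simp: zero_le_mult_iff)
    next
      case False
      hence "x = 0" "y = 0" using x0 y0 by auto
      then show ?thesis using h3 by simp
    qed
  qed
  have gx: "0 \<le> Gamma p v x" by (rule gamma_nonneg) (use x0 v0 p1 in auto)
  have gy: "0 \<le> Gamma p v y" by (rule gamma_nonneg) (use y0 v0 p1 in auto)
  show ?thesis
  proof (cases "0 \<le> z")
    case True
    have "0 \<le> Gamma p v z" by (rule gamma_nonneg) (use True v0 p1 in auto)
    then show ?thesis using gx gy by simp
  next
    case False
    define w where "w = - z"
    have w0: "0 \<le> w" using False w_def by simp
    have gz: "Gamma p v z = 2 * (real p - 1) * v ^ p - Gamma p v w"
      unfolding Gamma_def w_def using assms(1) by (simp add: power_minus_odd algebra_simps)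
    define a where "a = sqrt x"
    define b where "b = sqrt y"
    have a2: "a^2 = x" using x0 a_def by simp
    have b2: "b^2 = y" using y0 b_def by simp
    have ab: "0 \<le> a" "a \<le> 1" "0 \<le> b" "b \<le> 1" using assms(3,4) x0 y0 a_def b_def by auto
    have ws: "w \<le> a * b"
    proof -
      have "w^2 \<le> (a*b)^2" using zxy a2 b2 w_def by (simp add: power_mult_distrib)
      thus ?thesis using ab by (meson mult_nonneg_nonneg power2_le_imp_le)
    qed
    show ?thesis
    proof (cases "w ^ (p - 1) \<le> real p * v ^ (p - 1)")
      case True
      obtain q where q: "p = Suc q" using p1 by (cases p) auto
      have "w * w ^ (p - 1) \<le> w * (real p * v ^ (p - 1))"
        using True w0 by (rule mult_left_mono)
      hence "Gamma p v w \<le> (real p - 1) * v ^ p"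
        unfolding Gamma_def q by (simp add: algebra_simps)
      moreover have "2 * (real p - 1) * v ^ p = 2 * ((real p - 1) * v ^ p)" by simp
      moreover have "0 \<le> (real p - 1) * v ^ p" using p1 v0 by simp
      ultimately show ?thesis using gz gx gy by linarith
    next
      case False
      have "(a * b - w) * w ^ (p - 1) \<le> (a * b) ^ p - w ^ p"
        by (rule pow_diff_ge) (use w0 ws p1 in auto)
      moreover have "(a * b - w) * (real p * v ^ (p - 1)) \<le> (a * b - w) * w ^ (p - 1)"
        using False ws by (intro mult_left_mono) auto
      ultimately have "Gamma p v w \<le> Gamma p v (a * b)"
        unfolding Gamma_def by (simp add: algebra_simps)
      moreover have "0 \<le> Gamma p v (a^2) + Gamma p v (b^2) + 4 * (real p - 1) * v ^ p - 2 * Gamma p v (a * b)"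
        by (rule keyG) (use ab v0 p1 in auto)
      moreover have "4 * (real p - 1) * v ^ p = 2 * (2 * (real p - 1) * v ^ p)" by simp
      ultimately show ?thesis using gz unfolding a2 b2 by linarith
    qed
  qed
qed

end
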